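(* Let $i$ be a positive integer and $\mathcal A$ an alphabet. Let $\mathcal B$ be the Butterfly Network and let $\mathbf A_{\mathcal B}$ be an adversary able to attack up to one edge of $\mathcal U=\{e_1,e_2,e_3,e_4,e_6,e_7,e_9\}$ in each round, possibly a different one in each round (Scenario A.2). Then the $i$-shot capacity of $\mathcal B$ is \[C_i(\mathcal B,\mathcal A,\mathbf A_{\mathcal B})=\log_{|\mathcal A|}(|\mathcal A|-1).\]
   Context: An alphabet is a finite set $\mathcal A$ with $|\mathcal A|\ge2$. The Butterfly Network $\mathcal B$ has source $S$, intermediate nodes $V_1,V_2,V_3,V_4$, terminals $T_1,T_2$, and edges $e_1,e_2:S\to V_1$; $e_3,e_4:S\to V_2$; $e_5:V_1\to T_1$; $e_6:V_1\to V_3$; $e_7:V_2\to V_3$; $e_8:V_2\to T_2$; $e_9:V_3\to V_4$; $e_{10}:V_4\to T_1$; $e_{11}:V_4\to T_2$. Each edge carries one symbol of $\mathcal A$. A network code assigns to each $V_j$ a function from the symbols on its incoming edges to the symbols on its outgoing edges. In one use, $S$ sends $x\in\mathcal A^4$ on $e_1,\dots,e_4$, the adversary may replace the symbol on at most one edge of $\mathcal U$ by an arbitrary symbol, and values propagate; $\Omega_k(x)$ is the set of vectors terminal $T_k$ can receive. For $i$ uses with the same network code (Scenario A.2), the fan-out set at $T_k$ of $(x^1,\dots,x^i)$ is $\Omega_k(x^1)\times\dots\times\Omega_k(x^i)$. A nonempty code $C\subseteq(\mathcal A^4)^i$ is unambiguous if, for each of $T_1,T_2$, distinct codewords have disjoint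 fan-out sets; $C_i$ is the maximum of $\log_{|\mathcal A|}(|C|)/i$ over network codes and unambiguous codes. *)

theory Defs
  imports Complex_Main "HOL-Library.Cardinality"
begin

text \<open>Edges are numbered 1..11 as e_1..e_11.
  A network code assigns to each intermediate node a function from its incoming
  symbols to its outgoing symbols; we record it edge-wise (one component function
  per outgoing edge, each depending on all incoming symbols of the node).\<close>

record 'a ncode =
  f5  :: "'a \<Rightarrow> 'a \<Rightarrow> 'a"   (* V1: (e1,e2) -> e5 *)
  f6  :: "'a \<Rightarrow> 'a \<Rightarrow> 'a"   (* V1: (e1,e2) -> e6 *)
  f7  :: "'a \<Rightarrow> 'a \<Rightarrow> 'a"   (* V2: (e3,e4) -> e7 *)
  f8  :: "'a \<Rightarrow> 'a \<Rightarrow> 'a"   (* V2: (e3,e4) -> e8 *)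
  f9  :: "'a \<Rightarrow> 'a \<Rightarrow> 'a"   (* V3: (e6,e7) -> e9 *)
  f10 :: "'a \<Rightarrow> 'a"         (* V4: e9 -> e10 *)
  f11 :: "'a \<Rightarrow> 'a"         (* V4: e9 -> e11 *)

definition U_edges :: "nat set" where
  "U_edges = {1,2,3,4,6,7,9}"

fun adv :: "(nat \<times> 'a) option \<Rightarrow> nat \<Rightarrow> 'a \<Rightarrow> 'a" where
  "adv None j s = s"
| "adv (Some (e, b)) j s = (if j = e then b else s)"

fun adv_ok :: "(nat \<times> 'a) option \<Rightarrow> bool" where
  "adv_ok None = True"
| "adv_ok (Some (e, b)) = (e \<in> U_edges)"

text \<open>One use of the network: returns what T1 receives (on e5, e10) and what T2
  receives (on e8, e11).\<close>
definition run :: "'a ncode \<Rightarrow> (nat \<times> 'a) option \<Rightarrow> 'a \<times> 'a \<times> 'a \<times> 'a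
                    \<Rightarrow> ('a \<times> 'a) \<times> ('a \<times> 'a)" where
  "run c att x = (case x of (x1, x2, x3, x4) \<Rightarrow>
     let y1 = adv att 1 x1; y2 = adv att 2 x2; y3 = adv att 3 x3; y4 = adv att 4 x4;
         y5 = adv att 5 (f5 c y1 y2); y6 = adv att 6 (f6 c y1 y2);
         y7 = adv att 7 (f7 c y3 y4); y8 = adv att 8 (f8 c y3 y4);
         y9 = adv att 9 (f9 c y6 y7);
         y10 = adv att 10 (f10 c y9); y11 = adv att 11 (f11 c y9)
     in ((y5, y10), (y8, y11)))"

text \<open>Omega_k(x): the set of vectors terminal T_k (k = 1,2) can receive.\<close>
definition Omega :: "nat \<Rightarrow> 'a ncode \<Rightarrow> 'a \<times> 'a \<times> 'a \<times> 'a \<Rightarrow> ('a \<times> 'a) set" where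
  "Omega k c x = {(if k = 1 then fst else snd) (run c att x) | att. adv_ok att}"

text \<open>Fan-out set at T_k of a sequence of i inputs (Scenario A.2): product of the
  one-shot fan-out sets.\<close>
definition fanout :: "nat \<Rightarrow> 'a ncode \<Rightarrow> ('a \<times> 'a \<times> 'a \<times> 'a) list \<Rightarrow> ('a \<times> 'a) list set" where
  "fanout k c xs = listset (map (Omega k c) xs)"

definition unambiguous :: "'a ncode \<Rightarrow> nat \<Rightarrow> ('a \<times> 'a \<times> 'a \<times> 'a) list set \<Rightarrow> bool" where
  "unambiguous c i C \<longleftrightarrow> C \<noteq> {} \<and> (\<forall>xs\<in>C. length xs = i) \<and>
     (\<forall>k\<in>{1::nat, 2}. \<forall>xs\<in>C. \<forall>ys\<in>C. xs \<noteq> ys \<longrightarrow> fanout k c xs \<inter> fanout k c ys = {})"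

definition capacity :: "'a::finite itself \<Rightarrow> nat \<Rightarrow> real" where
  "capacity (t :: 'a itself) i = Max {log (real CARD('a)) (real (card C)) / real i
                       | c C. unambiguous (c :: 'a ncode) i C}"

end

theory Submission
  imports Defs
begin


lemma in_listset_iff:
  "zs \<in> listset Xs \<longleftrightarrow> length zs = length Xs \<and> (\<forall>j<length zs. zs ! j \<in> Xs ! j)"
proof (induction Xs arbitrary: zs)
  case Nil then show ?case by auto
next
  case (Cons X Xs)
  show ?case
  proof (cases zs)
    case Nil then show ?thesis by (auto simp: set_Cons_def)
  next
    case (Cons z zs')
    have "z # zs' \<in> listset (X # Xs) \<longleftrightarrow> z \<in> X \<and> zs' \<in> listset Xs"
      by (auto simp: set_Cons_def)
    also have "\<dots> \<longleftrightarrow> length (z#zs') = length (X#Xs) \<and> (\<forall>j<length (z#zs'). (z#zs') ! j \<in> (X#Xs) ! j)"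
      using Cons.IH[of zs'] by (auto simp: nth_Cons split: nat.splits)
    finally show ?thesis using Cons by simp
  qed
qed

lemma fanout_disjoint:
  assumes "j < length xs" "length xs = length ys" "Omega k c (xs!j) \<inter> Omega k c (ys!j) = {}"
  shows "fanout k c xs \<inter> fanout k c ys = {}"
  using assms by (auto simp: fanout_def in_listset_iff) (metis disjoint_iff)

lemma fanout_meet:
  assumes "length xs = length ys" "\<forall>j<length xs. Omega k c (xs!j) \<inter> Omega k c (ys!j) \<noteq> {}"
  shows "fanout k c xs \<inter> fanout k c ys \<noteq> {}"
proof -
  have "\<forall>j<length xs. \<exists>u. u \<in> Omega k c (xs!j) \<inter> Omega k c (ys!j)" using assms(2) by blast
  then obtain g where g: "\<forall>j<length xs. g j \<in> Omega k c (xs!j) \<inter> Omega k c (ys!j)" by metis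
  let ?zs = "map g [0..<length xs]"
  have "?zs \<in> fanout k c xs \<inter> fanout k c ys" using g assms(1) by (auto simp: fanout_def in_listset_iff)
  then show ?thesis by blast
qed

lemma in_Omega1: "adv_ok att \<Longrightarrow> fst (run c att x) \<in> Omega 1 c x"
  unfolding Omega_def by auto

lemma in_Omega2: "adv_ok att \<Longrightarrow> snd (run c att x) \<in> Omega 2 c x"
  unfolding Omega_def by auto

lemma confuse1:
  assumes "f5 c y1 y2 = f5 c a x2 \<or> f5 c y1 y2 = f5 c x1 a"
  shows "Omega 1 c (x1,x2,x3,x4) \<inter> Omega 1 c (y1,y2,y3,y4) \<noteq> {}"
  using assms
proof
  assume h: "f5 c y1 y2 = f5 c a x2"
  let ?B = "f9 c (f6 c a x2) (f7 c x3 x4)"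
  have "fst (run c (Some (1,a)) (x1,x2,x3,x4)) = fst (run c (Some (9,?B)) (y1,y2,y3,y4))"
    using h by (simp add: run_def Let_def)
  moreover have "adv_ok (Some (1::nat,a))" "adv_ok (Some (9::nat,?B))" by (auto simp: U_edges_def)
  ultimately show ?thesis using in_Omega1 by (metis disjoint_iff)
next
  assume h: "f5 c y1 y2 = f5 c x1 a"
  let ?B = "f9 c (f6 c x1 a) (f7 c x3 x4)"
  have "fst (run c (Some (2,a)) (x1,x2,x3,x4)) = fst (run c (Some (9,?B)) (y1,y2,y3,y4))"
    using h by (simp add: run_def Let_def)
  moreover have "adv_ok (Some (2::nat,a))" "adv_ok (Some (9::nat,?B))" by (auto simp: U_edges_def)
  ultimately show ?thesis using in_Omega1 by (metis disjoint_iff)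
qed

lemma exists_w:
  fixes f :: "'a::finite \<Rightarrow> 'a \<Rightarrow> 'a"
  assumes "CARD('a) \<ge> 2"
  shows "\<exists>w. \<forall>a b. \<not> ((\<forall>x. f a x = w) \<and> (\<forall>x. f x b = w))"
proof -
  obtain u v :: 'a where uv: "u \<noteq> v"
  proof -
    have "\<not> (\<forall>u v::'a. u = v)"
    proof
      assume "\<forall>u v::'a. u = v"
      then have "(UNIV::'a set) \<subseteq> {undefined}" by auto
      then have "CARD('a) \<le> 1" using card_mono[of "{undefined}" UNIV] by auto
      with assms show False by simp
    qed
    then show ?thesis using that by blast
  qed
  show ?thesis
  proof (rule ccontr)
    assume "\<not> ?thesis"
    then have hu: "\<exists>a b. (\<forall>x. f a x = u) \<and> (\<forall>x. f x b = u)"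
      and hv: "\<exists>a b. (\<forall>x. f a x = v) \<and> (\<forall>x. f x b = v)" by blast+
    then obtain a b a' b' where "\<forall>x. f a x = u" "\<forall>x. f x b' = v" by blast
    then have "u = v" by metis
    with uv show False by simp
  qed
qed

lemma upper:
  fixes c :: "'a::finite ncode"
  assumes card: "CARD('a) \<ge> 2" and un: "unambiguous c i C"
  shows "card C \<le> (CARD('a) - 1) ^ i"
proof -
  obtain w where nc: "\<forall>a b. \<not> ((\<forall>x. f5 c a x = w) \<and> (\<forall>x. f5 c x b = w))"
    using exists_w[OF card] by blast
  define \<phi> :: "'a \<times> 'a \<times> 'a \<times> 'a \<Rightarrow> 'a" where "\<phi> x = (case x of (x1,x2,x3,x4) \<Rightarrow>
      if f5 c x1 x2 \<noteq> w then f5 c x1 x2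
      else (SOME u. u \<noteq> w \<and> (\<exists>a. u = f5 c a x2 \<or> u = f5 c x1 a)))" for x
  have phi: "\<phi> (x1,x2,x3,x4) \<noteq> w \<and> (\<exists>a. \<phi> (x1,x2,x3,x4) = f5 c a x2 \<or> \<phi> (x1,x2,x3,x4) = f5 c x1 a)
      \<and> (f5 c x1 x2 \<noteq> w \<longrightarrow> \<phi> (x1,x2,x3,x4) = f5 c x1 x2)" for x1 x2 x3 x4
  proof (cases "f5 c x1 x2 = w")
    case False then show ?thesis by (auto simp: \<phi>_def)
  next
    case True
    have ex: "\<exists>u. u \<noteq> w \<and> (\<exists>a. u = f5 c a x2 \<or> u = f5 c x1 a)"
      using nc by metis
    show ?thesis using someI_ex[OF ex] True by (simp add: \<phi>_def)
  qed
  have conf: "Omega 1 c x \<inter> Omega 1 c y \<noteq> {}" if "\<phi> x = \<phi> y" for x y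
  proof -
    obtain x1 x2 x3 x4 where x: "x = (x1,x2,x3,x4)" by (cases x) auto
    obtain y1 y2 y3 y4 where y: "y = (y1,y2,y3,y4)" by (cases y) auto
    have e: "\<phi> (x1,x2,x3,x4) = \<phi> (y1,y2,y3,y4)" using that x y by simp
    show ?thesis
    proof (cases "f5 c y1 y2 \<noteq> w")
      case True
      then have "\<exists>a. f5 c y1 y2 = f5 c a x2 \<or> f5 c y1 y2 = f5 c x1 a"
        using phi[of y1 y2 y3 y4] phi[of x1 x2 x3 x4] e by metis
      then obtain a where "f5 c y1 y2 = f5 c a x2 \<or> f5 c y1 y2 = f5 c x1 a" by blast
      then show ?thesis using confuse1[of c y1 y2 a x2 x1 x3 x4 y3 y4] x y by blast
    next
      case False
      show ?thesis
      proof (cases "f5 c x1 x2 \<noteq> w")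
        case True
        then have "\<exists>a. f5 c x1 x2 = f5 c a y2 \<or> f5 c x1 x2 = f5 c y1 a"
          using phi[of y1 y2 y3 y4] phi[of x1 x2 x3 x4] e by metis
        then show ?thesis using confuse1[of c x1 x2 _ y2 y1 y3 y4 x3 x4] x y by blast
      next
        case False
        with \<open>\<not> f5 c y1 y2 \<noteq> w\<close> have "f5 c y1 y2 = f5 c x1 x2" by simp
        then show ?thesis using confuse1[of c y1 y2 x1 x2 x1 x3 x4 y3 y4] x y by blast
      qed
    qed
  qed
  have len: "\<forall>xs\<in>C. length xs = i"
    and dis: "\<forall>xs\<in>C. \<forall>ys\<in>C. xs \<noteq> ys \<longrightarrow> fanout 1 c xs \<inter> fanout 1 c ys = {}"
    using un unfolding unambiguous_def by auto
  have inj: "inj_on (map \<phi>) C"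
  proof (rule inj_onI)
    fix xs ys assume xs: "xs \<in> C" and ys: "ys \<in> C" and m: "map \<phi> xs = map \<phi> ys"
    show "xs = ys"
    proof (rule ccontr)
      assume ne: "xs \<noteq> ys"
      have l: "length xs = length ys" using len xs ys by simp
      have "\<forall>j<length xs. Omega 1 c (xs!j) \<inter> Omega 1 c (ys!j) \<noteq> {}"
      proof (intro allI impI)
        fix j assume "j < length xs"
        then have "\<phi> (xs!j) = \<phi> (ys!j)" using m l by (metis nth_map)
        then show "Omega 1 c (xs!j) \<inter> Omega 1 c (ys!j) \<noteq> {}" by (rule conf)
      qed
      then have "fanout 1 c xs \<inter> fanout 1 c ys \<noteq> {}" using fanout_meet l by blast
      with dis xs ys ne show False by blast
    qed
  qed
  have sub: "map \<phi> ` C \<subseteq> {zs. set zs \<subseteq> UNIV - {w} \<and> length zs = i}"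
  proof
    fix zs assume "zs \<in> map \<phi> ` C"
    then obtain xs where "xs \<in> C" "zs = map \<phi> xs" by blast
    moreover have "\<phi> x \<noteq> w" for x using phi[of "fst x" "fst (snd x)" "fst (snd (snd x))" "snd (snd (snd x))"] by simp
    ultimately show "zs \<in> {zs. set zs \<subseteq> UNIV - {w} \<and> length zs = i}" using len by auto
  qed
  have "card C = card (map \<phi> ` C)" using inj by (simp add: card_image)
  also have "\<dots> \<le> card {zs. set zs \<subseteq> UNIV - {w} \<and> length zs = i}"
    by (rule card_mono[OF finite_lists_length_eq sub]) simp
  also have "\<dots> = (CARD('a) - 1) ^ i" by (simp add: card_lists_length_eq card_Diff_singleton)
  finally show ?thesis .
qed

definition c0 :: "'a \<Rightarrow> 'a ncode" where
  "c0 z = \<lparr>f5 = (\<lambda>a b. if a = b then a else z), f6 = (\<lambda>a b. if a = b then a else z),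
           f7 = (\<lambda>a b. if a = b then a else z), f8 = (\<lambda>a b. if a = b then a else z),
           f9 = (\<lambda>u t. if t \<noteq> z then t else u), f10 = id, f11 = id\<rparr>"

lemma run_c0:
  assumes "m \<noteq> z"
  shows "run (c0 z) None (m,m,m,m) = ((m,m),(m,m))"
    and "run (c0 z) (Some (Suc 0,b)) (m,m,m,m) = ((if b = m then m else z, m), (m, m))"
    and "run (c0 z) (Some (2,b)) (m,m,m,m) = ((if b = m then m else z, m), (m, m))"
    and "run (c0 z) (Some (3,b)) (m,m,m,m) = ((m, m), (if b = m then m else z, m))"
    and "run (c0 z) (Some (4,b)) (m,m,m,m) = ((m, m), (if b = m then m else z, m))"
    and "run (c0 z) (Some (6,b)) (m,m,m,m) = ((m, m), (m, m))"
    and "run (c0 z) (Some (7,b)) (m,m,m,m) = ((m, if b \<noteq> z then b else m), (m, if b \<noteq> z then b else m))"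
    and "run (c0 z) (Some (9,b)) (m,m,m,m) = ((m, b), (m, b))"
  using assms by (simp_all add: run_def Let_def c0_def)

lemma run_good:
  assumes "m \<noteq> z" "adv_ok att"
  shows "(\<lambda>p. fst p = m \<or> (fst p = z \<and> snd p = m)) (fst (run (c0 z) att (m,m,m,m))) \<and>
         (\<lambda>p. fst p = m \<or> (fst p = z \<and> snd p = m)) (snd (run (c0 z) att (m,m,m,m)))"
proof (cases att)
  case None then show ?thesis by (simp add: run_c0[OF assms(1)])
next
  case (Some p)
  obtain e b where p: "p = (e,b)" by (cases p)
  have "e \<in> {1,2,3,4,6,7,9}" using assms(2) Some p by (simp add: U_edges_def)
  then have "e = 1 \<or> e = 2 \<or> e = 3 \<or> e = 4 \<or> e = 6 \<or> e = 7 \<or> e = 9" by simp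
  then show ?thesis
  proof (elim disjE)
  
    assume "e = 1"
    then have "att = Some (1,b)" using Some p by simp
    then show ?thesis by (simp add: run_c0[OF assms(1)])
  next
    assume "e = 2"
    then have "att = Some (2,b)" using Some p by simp
    then show ?thesis by (simp add: run_c0[OF assms(1)])
  next
    assume "e = 3"
    then have "att = Some (3,b)" using Some p by simp
    then show ?thesis by (simp add: run_c0[OF assms(1)])
  next
    assume "e = 4"
    then have "att = Some (4,b)" using Some p by simp
    then show ?thesis by (simp add: run_c0[OF assms(1)])
  next
    assume "e = 6"
    then have "att = Some (6,b)" using Some p by simp
    then show ?thesis by (simp add: run_c0[OF assms(1)])
  next
    assume "e = 7"
    then have "att = Some (7,b)" using Some p by simp
    then show ?thesis by (simp add: run_c0[OF assms(1)])
  next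
    assume "e = 9"
    then have "att = Some (9,b)" using Some p by simp
    then show ?thesis by (simp add: run_c0[OF assms(1)])
  qed
qed

lemma omega_good:
  assumes "m \<noteq> z" "k = 1 \<or> k = 2" "(u, s) \<in> Omega k (c0 z) (m,m,m,m)"
  shows "u = m \<or> (u = z \<and> s = m)"
proof -
  obtain att where ok: "adv_ok att" and us: "(u,s) = (if k = 1 then fst else snd) (run (c0 z) att (m,m,m,m))"
    using assms(3) unfolding Omega_def mem_Collect_eq by blast
  note g = run_good[OF assms(1) ok]
  show ?thesis
  proof (cases "k = 1")
    case True
    then have "(u,s) = fst (run (c0 z) att (m,m,m,m))" using us by simp
    then show ?thesis using g by (metis fst_conv snd_conv)
  next
    case False
    then have "(u,s) = snd (run (c0 z) att (m,m,m,m))" using us by simp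
    then show ?thesis using g by (metis fst_conv snd_conv)
  qed
qed

lemma omega_disj:
  assumes "m \<noteq> z" "m' \<noteq> z" "m \<noteq> m'" "k = 1 \<or> k = 2"
  shows "Omega k (c0 z) (m,m,m,m) \<inter> Omega k (c0 z) (m',m',m',m') = {}"
proof (rule ccontr)
  assume "\<not> ?thesis"
  then obtain u s where "(u,s) \<in> Omega k (c0 z) (m,m,m,m)" "(u,s) \<in> Omega k (c0 z) (m',m',m',m')" by auto
  then have "u = m \<or> (u = z \<and> s = m)" "u = m' \<or> (u = z \<and> s = m')"
    using omega_good[OF assms(1) assms(4)] omega_good[OF assms(2) assms(4)] by blast+
  with assms show False by auto
qed

lemma lower:
  fixes z :: "'a::finite"
  assumes "i > 0"
  defines "D \<equiv> (\<lambda>m. (m,m,m,m)) ` (UNIV - {z})"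
  defines "C \<equiv> {xs. set xs \<subseteq> D \<and> length xs = i}"
  assumes "CARD('a) \<ge> 2"
  shows "unambiguous (c0 z) i C \<and> card C = (CARD('a) - 1) ^ i"
proof
  have cD: "card D = CARD('a) - 1" unfolding D_def
    by (subst card_image) (auto intro: inj_onI simp: card_Diff_singleton)
  show "card C = (CARD('a) - 1) ^ i" unfolding C_def using cD by (simp add: card_lists_length_eq)
  obtain m0 :: 'a where m0: "m0 \<noteq> z"
  proof -
    have "\<not> (UNIV::'a set) \<subseteq> {z}"
    proof
      assume "(UNIV::'a set) \<subseteq> {z}"
      then have "CARD('a) \<le> 1" using card_mono[of "{z}" UNIV] by auto
      with assms show False by simp
    qed
    then show ?thesis using that by blast
  qed
  have "replicate i (m0,m0,m0,m0) \<in> C" unfolding C_def D_def using m0 by auto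
  then have ne: "C \<noteq> {}" by blast
  have dis: "fanout k (c0 z) xs \<inter> fanout k (c0 z) ys = {}"
    if k: "k = 1 \<or> k = 2" and xs: "xs \<in> C" and ys: "ys \<in> C" and ne: "xs \<noteq> ys" for k xs ys
  proof -
    have l: "length xs = length ys" using xs ys unfolding C_def by simp
    have "\<exists>j<length xs. xs!j \<noteq> ys!j"
    proof (rule ccontr)
      assume "\<not> ?thesis"
      then have "xs = ys" using l by (intro nth_equalityI) auto
      with ne show False by simp
    qed
    then obtain j where j: "j < length xs" "xs!j \<noteq> ys!j" by blast
    have "xs!j \<in> set xs" "ys!j \<in> set ys" using j l by simp_all
    then have "xs!j \<in> D" "ys!j \<in> D" using xs ys unfolding C_def by blast+
    then obtain m m' where "xs!j = (m,m,m,m)" "ys!j = (m',m',m',m')" "m \<noteq> z" "m' \<noteq> z"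
      unfolding D_def by (auto simp: image_iff)
    moreover then have "m \<noteq> m'" using j by auto
    ultimately have "Omega k (c0 z) (xs!j) \<inter> Omega k (c0 z) (ys!j) = {}"
      using omega_disj k by simp
    then show ?thesis using fanout_disjoint j l by blast
  qed
  show "unambiguous (c0 z) i C" unfolding unambiguous_def using ne dis by (auto simp: C_def)
qed


theorem proposition5p8:
  fixes i :: nat
  assumes "i > 0" and "CARD('a::finite) \<ge> 2"
  shows "capacity TYPE('a) i = log (real CARD('a)) (real CARD('a) - 1)"
proof -
  let ?q = "real CARD('a)"
  let ?t = "log ?q (?q - 1)"
  define S where "S = {log (real CARD('a)) (real (card C)) / real i | (c::'a ncode) C. unambiguous c i C}"
  have cap: "capacity TYPE('a) i = Max S" unfolding capacity_def S_def by simp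
  have q1: "?q > 1" using assms(2) by simp
  have qm: "real (CARD('a) - 1) = ?q - 1" using assms(2) by (simp add: of_nat_diff)
  have qm0: "?q - 1 > 0" using q1 by simp
  have key: "log ?q (real ((CARD('a) - 1) ^ i)) / real i = ?t"
    using qm qm0 assms(1) by (simp add: log_nat_power)
  have upS: "s \<le> ?t" if sS: "s \<in> S" for s
  proof -
    obtain c C where s: "s = log ?q (real (card C)) / real i" and un: "unambiguous (c::'a ncode) i C"
      using sS unfolding S_def by blast
    have le: "card C \<le> (CARD('a) - 1) ^ i" by (rule upper[OF assms(2) un])
    have fin: "finite C"
    proof (rule finite_subset)
      show "C \<subseteq> {xs. set xs \<subseteq> UNIV \<and> length xs = i}" using un unfolding unambiguous_def by auto
      show "finite {xs::('a\<times>'a\<times>'a\<times>'a) list. set xs \<subseteq> UNIV \<and> length xs = i}"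
        by (rule finite_lists_length_eq) simp
    qed
    have "C \<noteq> {}" using un unfolding unambiguous_def by auto
    then have pos: "card C > 0" using fin by (simp add: card_gt_0_iff)
    have "log ?q (real (card C)) \<le> log ?q (real ((CARD('a) - 1) ^ i))"
    proof (rule log_mono[OF q1])
      show "0 < real (card C)" using pos by simp
      show "real (card C) \<le> real ((CARD('a) - 1) ^ i)" using le by (simp only: of_nat_le_iff)
    qed
    then have "log ?q (real (card C)) / real i \<le> log ?q (real ((CARD('a) - 1) ^ i)) / real i"
      using assms(1) by (simp add: divide_right_mono)
    then show ?thesis using s key by simp
  qed
  have inS: "?t \<in> S"
  proof -
    obtain C where "unambiguous (c0 (undefined::'a)) i C \<and> card C = (CARD('a) - 1) ^ i"
      using lower[OF assms(1), of undefined] assms(2) by blast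
    then show ?thesis unfolding S_def using key by force
  qed
  have finS: "finite S"
  proof (rule finite_subset)
    show "S \<subseteq> (\<lambda>n::nat. log ?q (real n) / real i) ` {..(CARD('a) - 1) ^ i}"
    proof
      fix s assume "s \<in> S"
      then obtain c C where s: "s = log ?q (real (card C)) / real i" and un: "unambiguous (c::'a ncode) i C"
        unfolding S_def by blast
      have "card C \<le> (CARD('a) - 1) ^ i" by (rule upper[OF assms(2) un])
      then show "s \<in> (\<lambda>n::nat. log ?q (real n) / real i) ` {..(CARD('a) - 1) ^ i}" using s by auto
    qed
  qed simp
  have "Max S = ?t" by (rule Max_eqI[OF finS upS inS])
  then show ?thesis using cap by simp
qed

end
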